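(* Let $P$ be a connected shrub on a finite set $I$ with at least two elements. Then there exists a vertex of height $1$ that covers every vertex of height $0$ of $P$.
   Context: A shrub $P$ on a finite set $I$ is a set $E$ of edges (unordered pairs $\{i,j\}$ of distinct elements of $I$) together with a height function $h_P:I\to\mathbb{N}$. Say that $j$ covers $i$ if $\{i,j\}\in E$ and $h_P(j)=h_P(i)+1$. The axioms are: (1) if $\{i,j\}\in E$ then $h_P(i)=h_P(j)\pm 1$; (2) if $h_P(j)>0$ then there is an edge $\{i,j\}$ with $h_P(i)=h_P(j)-1$; (3) there are no four distinct vertices $a,b,c,d$ such that $a$ covers $b$ and $c$, $c$ covers $d$, and $\{b,d\}\notin E$; (4) there are no five distinct vertices $a,b,c,d,e$ such that $a$ covers $c$ and $d$, $b$ covers $d$ and $e$, $\{a,e\}\notin E$ and $\{b,c\}\notin E$. A shrub is connected if its underlying graph $(I,E)$ is connected. *)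

theory Defs
  imports Main
begin

definition covers :: "'a set set \<Rightarrow> ('a \<Rightarrow> nat) \<Rightarrow> 'a \<Rightarrow> 'a \<Rightarrow> bool" where
  "covers E h j i \<longleftrightarrow> {i, j} \<in> E \<and> h j = h i + 1"

definition shrub :: "'a set \<Rightarrow> 'a set set \<Rightarrow> ('a \<Rightarrow> nat) \<Rightarrow> bool" where
  "shrub I E h \<longleftrightarrow>
     finite I \<and>
     (\<forall>e\<in>E. \<exists>i j. e = {i, j} \<and> i \<noteq> j \<and> i \<in> I \<and> j \<in> I) \<and>
     (\<forall>i\<in>I. \<forall>j\<in>I. {i, j} \<in> E \<longrightarrow> h i = h j + 1 \<or> h j = h i + 1) \<and>
     (\<forall>j\<in>I. h j > 0 \<longrightarrow> (\<exists>i\<in>I. {i, j} \<in> E \<and> h i + 1 = h j)) \<and>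
     \<not> (\<exists>a\<in>I. \<exists>b\<in>I. \<exists>c\<in>I. \<exists>d\<in>I. distinct [a, b, c, d] \<and>
          covers E h a b \<and> covers E h a c \<and> covers E h c d \<and> {b, d} \<notin> E) \<and>
     \<not> (\<exists>a\<in>I. \<exists>b\<in>I. \<exists>c\<in>I. \<exists>d\<in>I. \<exists>e\<in>I. distinct [a, b, c, d, e] \<and>
          covers E h a c \<and> covers E h a d \<and> covers E h b d \<and> covers E h b e \<and>
          {a, e} \<notin> E \<and> {b, c} \<notin> E)"

definition shrub_connected :: "'a set \<Rightarrow> 'a set set \<Rightarrow> bool" where
  "shrub_connected I E \<longleftrightarrow>
     (\<forall>x\<in>I. \<forall>y\<in>I. \<exists>p. p \<noteq> [] \<and> hd p = x \<and> last p = y \<and> set p \<subseteq> I \<and>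
        (\<forall>k. Suc k < length p \<longrightarrow> {p ! k, p ! Suc k} \<in> E))"

end

theory Submission
  imports Defs
begin

primrec good :: "'a set \<Rightarrow> 'a set set \<Rightarrow> ('a \<Rightarrow> nat) \<Rightarrow> 'a \<Rightarrow> nat \<Rightarrow> 'a \<Rightarrow> bool" where
  "good I E h v 0 x = ({x, v} \<in> E)"
| "good I E h v (Suc k) x = (\<forall>z\<in>I. covers E h x z \<longrightarrow> good I E h v k z)"

lemma good_down:
  assumes "x \<in> I" "y \<in> I" "covers E h x y" "good I E h v (h x) x"
  shows "good I E h v (h y) y"
proof -
  have "h x = Suc (h y)" using assms(3) by (simp add: covers_def)
  with assms show ?thesis by simp
qed

lemma good_up:
  assumes sh: "shrub I E h" and vI: "v \<in> I" and hv: "h v = 1"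
    and mx: "\<forall>w\<in>I. h w = 1 \<longrightarrow> card {e\<in>I. covers E h w e} \<le> card {e\<in>I. covers E h v e}"
    and xI: "x \<in> I" and yI: "y \<in> I" and cyx: "covers E h y x" and gx: "good I E h v (h x) x"
  shows "good I E h v (h y) y"
proof (cases "h x")
  case 0
  then have hy: "h y = 1" using cyx by (simp add: covers_def)
  have ax4: "\<not> (\<exists>a\<in>I. \<exists>b\<in>I. \<exists>c\<in>I. \<exists>d\<in>I. \<exists>e\<in>I. distinct [a, b, c, d, e] \<and>
          covers E h a c \<and> covers E h a d \<and> covers E h b d \<and> covers E h b e \<and>
          {a, e} \<notin> E \<and> {b, c} \<notin> E)" using sh unfolding shrub_def by blast
  have cvx: "covers E h v x" using gx 0 hv by (simp add: covers_def insert_commute)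
  show ?thesis
  proof (cases "y = v")
    case True
    then show ?thesis using hy by (simp add: covers_def insert_commute)
  next
    case False
    show ?thesis
    proof (rule ccontr)
      assume "\<not> good I E h v (h y) y"
      then obtain z where zI: "z \<in> I" and cyz: "covers E h y z" and nz: "{z, v} \<notin> E"
        using hy by auto
      have ncvz: "\<not> covers E h v z" using nz by (simp add: covers_def insert_commute)
      have sub: "{e\<in>I. covers E h v e} \<subseteq> {e\<in>I. covers E h y e}"
      proof
        fix e assume "e \<in> {e\<in>I. covers E h v e}"
        then have eI: "e \<in> I" and cve: "covers E h v e" by auto
        show "e \<in> {e\<in>I. covers E h y e}"
        proof (rule ccontr)
          assume "e \<notin> {e\<in>I. covers E h y e}"
          then have ncye: "\<not> covers E h y e" using eI by auto
          have he: "h e = 0" using cve hv by (simp add: covers_def)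
          have hz: "h z = 0" using cyz hy by (simp add: covers_def)
          have nye: "{y, e} \<notin> E" using ncye hy he by (simp add: covers_def insert_commute)
          have nvz: "{v, z} \<notin> E" using nz by (simp add: insert_commute)
          have d: "distinct [y, v, z, x, e]"
            using False ncvz cvx cyx ncye cve cyz hy hv he hz 0
            by (auto simp: covers_def)
          show False using ax4 yI vI zI xI eI d cyz cyx cvx cve nye nvz by blast
        qed
      qed
      have "z \<in> {e\<in>I. covers E h y e}" "z \<notin> {e\<in>I. covers E h v e}" using zI cyz ncvz by auto
      with sub have ps: "{e\<in>I. covers E h v e} \<subset> {e\<in>I. covers E h y e}" by blast
      have fin: "finite I" using sh by (simp add: shrub_def)
      have "card {e\<in>I. covers E h v e} < card {e\<in>I. covers E h y e}"
        using ps fin by (intro psubset_card_mono) auto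
      moreover have "card {e\<in>I. covers E h y e} \<le> card {e\<in>I. covers E h v e}" using mx yI hy by blast
      ultimately show False by simp
    qed
  qed
next
  case (Suc k)
  have ax3: "\<not> (\<exists>a\<in>I. \<exists>b\<in>I. \<exists>c\<in>I. \<exists>d\<in>I. distinct [a, b, c, d] \<and>
          covers E h a b \<and> covers E h a c \<and> covers E h c d \<and> {b, d} \<notin> E)"
    using sh unfolding shrub_def by blast
  have hy: "h y = Suc (Suc k)" using cyx Suc by (simp add: covers_def)
  have gx': "\<forall>w\<in>I. covers E h x w \<longrightarrow> good I E h v k w" using gx Suc by simp
  show ?thesis unfolding hy good.simps
  proof (intro ballI impI)
    fix z w assume zI: "z \<in> I" and cyz: "covers E h y z" and wI: "w \<in> I" and czw: "covers E h z w"
    show "good I E h v k w"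
    proof (cases "z = x")
      case True then show ?thesis using gx' wI czw by blast
    next
      case False
      have hz: "h z = Suc k" using cyz hy by (simp add: covers_def)
      have hw: "h w = k" using czw hz by (simp add: covers_def)
      have d: "distinct [y, x, z, w]" using False hy hz hw Suc by auto
      have "{x, w} \<in> E" using ax3 yI xI zI wI d cyx cyz czw by blast
      then have "covers E h x w" using Suc hw by (simp add: covers_def insert_commute)
      then show ?thesis using gx' wI by blast
    qed
  qed
qed

theorem mainTheorem1:
  fixes I :: "'a set" and E :: "'a set set" and h :: "'a \<Rightarrow> nat"
  assumes "shrub I E h"
    and "shrub_connected I E"
    and "card I \<ge> 2"
  shows "\<exists>v\<in>I. h v = 1 \<and> (\<forall>u\<in>I. h u = 0 \<longrightarrow> covers E h v u)"
proof -
  have fin: "finite I" using assms(1) by (simp add: shrub_def)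
  have ne: "I \<noteq> {}" using assms(3) by auto
  have edge: "\<And>i j. i \<in> I \<Longrightarrow> j \<in> I \<Longrightarrow> {i, j} \<in> E \<Longrightarrow> h i = h j + 1 \<or> h j = h i + 1"
    using assms(1) unfolding shrub_def by blast
  have down: "\<And>j. j \<in> I \<Longrightarrow> h j > 0 \<Longrightarrow> \<exists>i\<in>I. {i, j} \<in> E \<and> h i + 1 = h j"
    using assms(1) unfolding shrub_def by blast
  obtain x0 where x0: "x0 \<in> I" "\<forall>y\<in>I. h x0 \<le> h y"
  proof -
    have "finite (h ` I)" "h ` I \<noteq> {}" using fin ne by auto
    then obtain x0 where "x0 \<in> I" "h x0 = Min (h ` I)" using Min_in by (metis imageE)
    then show ?thesis using that fin by auto
  qed
  have hx0: "h x0 = 0"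
  proof (rule ccontr)
    assume "h x0 \<noteq> 0"
    then obtain i where "i \<in> I" "h i + 1 = h x0" using down x0(1) by blast
    with x0(2) show False by fastforce
  qed
  obtain y where yI: "y \<in> I" "y \<noteq> x0"
  proof -
    have "\<not> I \<subseteq> {x0}"
    proof
      assume "I \<subseteq> {x0}"
      then have "card I \<le> card {x0}" by (intro card_mono) auto
      with assms(3) show False by simp
    qed
    then show ?thesis using that by blast
  qed
  obtain p where p: "p \<noteq> []" "hd p = x0" "last p = y" "set p \<subseteq> I"
      "\<forall>k. Suc k < length p \<longrightarrow> {p ! k, p ! Suc k} \<in> E"
    using assms(2) x0(1) yI(1) unfolding shrub_connected_def by blast
  have lp: "length p \<ge> 2"
  proof (rule ccontr)
    assume "\<not> length p \<ge> 2"
    then have "length p = 1" using p(1) by (cases p) (auto simp: Suc_le_eq)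
    then have "hd p = last p" by (cases p) auto
    with p yI show False by simp
  qed
  have p0: "p ! 0 = x0" using p(1,2) by (simp add: hd_conv_nth)
  have p1I: "p ! 1 \<in> I" using p(4) lp by auto
  have "{p ! 0, p ! 1} \<in> E" using p(5) lp by auto
  then have "h (p ! 1) = 1" using edge[OF _ p1I] p0 x0(1) hx0 by fastforce
  then have H1: "{w\<in>I. h w = 1} \<noteq> {}" using p1I by blast
  define f where "f w = card {e\<in>I. covers E h w e}" for w
  have finH: "finite (f ` {w\<in>I. h w = 1})" using fin by auto
  obtain v where vI: "v \<in> I" "h v = 1" "f v = Max (f ` {w\<in>I. h w = 1})"
    using Max_in[OF finH] H1 by auto
  have mx: "\<forall>w\<in>I. h w = 1 \<longrightarrow> card {e\<in>I. covers E h w e} \<le> card {e\<in>I. covers E h v e}"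
    using vI(3) finH unfolding f_def[symmetric] by (auto intro: Max_ge)
  have gv: "good I E h v (h v) v" using vI(2) by (simp add: covers_def insert_commute)
  have step: "\<And>a b. a \<in> I \<Longrightarrow> b \<in> I \<Longrightarrow> {a, b} \<in> E \<Longrightarrow> good I E h v (h a) a \<Longrightarrow> good I E h v (h b) b"
  proof -
    fix a b assume aI: "a \<in> I" and bI: "b \<in> I" and ab: "{a, b} \<in> E" and ga: "good I E h v (h a) a"
    from edge[OF aI bI ab] show "good I E h v (h b) b"
    proof
      assume "h a = h b + 1"
      then have "covers E h a b" using ab by (simp add: covers_def insert_commute)
      then show ?thesis using good_down aI bI ga by metis
    next
      assume "h b = h a + 1"
      then have "covers E h b a" using ab by (simp add: covers_def)
      then show ?thesis using good_up[OF assms(1) vI(1,2) mx aI bI] ga by blast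
    qed
  qed
  have allgood: "\<forall>u\<in>I. good I E h v (h u) u"
  proof
    fix u assume uI: "u \<in> I"
    obtain q where q: "q \<noteq> []" "hd q = v" "last q = u" "set q \<subseteq> I"
        "\<forall>k. Suc k < length q \<longrightarrow> {q ! k, q ! Suc k} \<in> E"
      using assms(2) vI(1) uI unfolding shrub_connected_def by blast
    have "\<forall>k. k < length q \<longrightarrow> good I E h v (h (q ! k)) (q ! k)"
    proof (intro allI)
      fix k show "k < length q \<longrightarrow> good I E h v (h (q ! k)) (q ! k)"
      proof (induction k)
        case 0 then show ?case using q(1,2) gv by (simp add: hd_conv_nth)
      next
        case (Suc k)
        show ?case
        proof
          assume sk: "Suc k < length q"
          then have "q ! k \<in> I" "q ! Suc k \<in> I" using q(4) by auto
          then show "good I E h v (h (q ! Suc k)) (q ! Suc k)"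
            using step q(5) sk Suc by auto
        qed
      qed
    qed
    then show "good I E h v (h u) u" using q(1,3) by (metis last_conv_nth diff_less zero_less_one length_greater_0_conv)
  qed
  show ?thesis
  proof (intro bexI conjI ballI impI)
    fix u assume "u \<in> I" "h u = 0"
    then show "covers E h v u" using allgood vI(2) by (force simp: covers_def insert_commute)
  qed (use vI in auto)
qed

end
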